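(* Consider the single-camp, two-phase problem with bias-dependent camp weights described in the context: maximize $\sum_i v_i^{(2)}$ over nonnegative vectors $\mathbf{x^{(1)}},\mathbf{x^{(2)}}\in\mathbb{R}^n$ with $\sum_i x_i^{(1)}+\sum_i x_i^{(2)}\le k_g$. Let $k_g^{(1)}=\sum_i x_i^{(1)}$ and $k_g^{(2)}=\sum_i x_i^{(2)}$. Then it is optimal to exhaust the entire budget ($k_g^{(1)}+k_g^{(2)}=k_g$), and if not, it is optimal to not invest at all ($k_g^{(1)}=k_g^{(2)}=0$). Furthermore, it is an optimal strategy to invest on at most one node in a given phase (i.e., there is an optimal solution in which each of $\mathbf{x^{(1)}}$ and $\mathbf{x^{(2)}}$ has at most one nonzero entry).
   Context: A social network has node set $N=\{1,\dots,n\}$ and a real $n\times n$ matrix $\mathbf{w}=(w_{ij})$ with $\sum_j|w_{ij}|<1$ for every $i$; write $\Delta=(\mathbf{I}-\mathbf{w})^{-1}$. Each node $i$ has an initial opinion $v_i^0$, a bias weight $w_{ii}^0$, and a total camp weight $\theta_i$. There is a single (good) camp with budget $k_g\ge 0$ choosing investments $\mathbf{x^{(1)}},\mathbf{x^{(2)}}\ge 0$ in phases 1 and 2. Opinions evolve by $\mathbf{v^{(0)}}=\mathbf{v^0}$ and for $p=1,2$: $\mathbf{v^{(p)}}=\Delta(\mathbf{w^0}\circ\mathbf{v^{(p-1)}}+\mathbf{w_g^{(p)}}\circ\mathbf{x^{(p)}})$, where $\circ$ is the entrywise product, $\mathbf{w^0}=(w_{ii}^0)_i$, and the camp's influence weight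 on node $i$ in phase $p$ depends on the node's opinion at the start of that phase: $w_{ig}^{(p)}=\theta_i\frac{1+w_{ii}^0 v_i^{(p-1)}}{2}$. *)

theory Defs
  imports "HOL-Analysis.Analysis"
begin

text \<open>Nodes are the elements of a finite type 'n; vectors are real^'n, matrices real^'n^'n.\<close>

definition Delta :: "real^'n^'n \<Rightarrow> real^'n^'n" where
  "Delta w = matrix_inv (mat 1 - w)"

definition camp_weight :: "real^'n \<Rightarrow> real^'n \<Rightarrow> real^'n \<Rightarrow> real^'n" where
  "camp_weight theta w0 v = (\<chi> i. theta$i * (1 + w0$i * v$i) / 2)"

definition phase_step ::
  "real^'n^'n \<Rightarrow> real^'n \<Rightarrow> real^'n \<Rightarrow> real^'n \<Rightarrow> real^'n \<Rightarrow> real^'n" where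
  "phase_step w w0 theta v x =
     Delta w *v (\<chi> i. w0$i * v$i + (camp_weight theta w0 v)$i * x$i)"

definition opinion2 ::
  "real^'n^'n \<Rightarrow> real^'n \<Rightarrow> real^'n \<Rightarrow> real^'n \<Rightarrow> real^'n \<Rightarrow> real^'n \<Rightarrow> real^'n" where
  "opinion2 w w0 theta v0 x1 x2 = phase_step w w0 theta (phase_step w w0 theta v0 x1) x2"

definition objective ::
  "real^'n^'n \<Rightarrow> real^'n \<Rightarrow> real^'n \<Rightarrow> real^'n \<Rightarrow> real^'n \<Rightarrow> real^'n \<Rightarrow> real" where
  "objective w w0 theta v0 x1 x2 = (\<Sum>i\<in>UNIV. (opinion2 w w0 theta v0 x1 x2)$i)"

definition feasible :: "real \<Rightarrow> real^'n \<Rightarrow> real^'n \<Rightarrow> bool" where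
  "feasible kg x1 x2 \<longleftrightarrow> (\<forall>i. x1$i \<ge> 0) \<and> (\<forall>i. x2$i \<ge> 0) \<and>
     (\<Sum>i\<in>UNIV. x1$i) + (\<Sum>i\<in>UNIV. x2$i) \<le> kg"

end

theory Submission
  imports Defs
begin

definition spike :: "'n \<Rightarrow> real \<Rightarrow> real^'n" where
  "spike j B = (\<chi> i. if i = j then B else 0)"

lemma sum_spike: "(\<Sum>i\<in>UNIV. spike j B $ i) = B"
  by (simp add: spike_def)

lemma card_spike: "card {i. spike j B $ i \<noteq> 0} \<le> 1"
proof -
  have "{i. spike j B $ i \<noteq> 0} \<subseteq> {j}" by (auto simp: spike_def)
  then have "card {i. spike j B $ i \<noteq> 0} \<le> card {j}" by (rule card_mono[rotated]) simp
  then show ?thesis by simp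
qed

lemma spike_nonneg: "B \<ge> 0 \<Longrightarrow> spike j B $ i \<ge> 0"
  by (simp add: spike_def)

lemma vertex:
  fixes F :: "real^'n \<Rightarrow> real" and \<beta> :: "real^'n"
  assumes F: "\<And>y. F y = \<alpha> + (\<Sum>i\<in>UNIV. \<beta>$i * y$i)" and B: "B \<ge> 0"
  shows "\<exists>x. (x = 0 \<or> (\<exists>j. x = spike j B)) \<and>
     (\<forall>y. (\<forall>i. y$i \<ge> 0) \<and> (\<Sum>i\<in>UNIV. y$i) \<le> B \<longrightarrow> F y \<le> F x)"
proof -
  have fin: "finite (range (\<lambda>i. \<beta>$i))" by simp
  have "Max (range (\<lambda>i. \<beta>$i)) \<in> range (\<lambda>i. \<beta>$i)"
    by (rule Max_in[OF fin]) simp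
  then obtain j where j: "\<beta>$j = Max (range (\<lambda>i. \<beta>$i))"
    by (metis rangeE)
  have jm: "\<And>i. \<beta>$i \<le> \<beta>$j" unfolding j using fin by simp
  show ?thesis
  proof (cases "\<beta>$j \<le> 0")
    case True
    show ?thesis
    proof (intro exI[of _ 0] conjI allI impI)
      fix y :: "real^'n" assume y: "(\<forall>i. y$i \<ge> 0) \<and> (\<Sum>i\<in>UNIV. y$i) \<le> B"
      have "(\<Sum>i\<in>UNIV. \<beta>$i * y$i) \<le> 0"
        by (rule sum_nonpos) (meson True jm order_trans y mult_nonpos_nonneg)
      then show "F y \<le> F 0" using F[of y] F[of 0] by simp
    qed simp
  next
    case False
    show ?thesis
    proof (intro exI[of _ "spike j B"] conjI allI impI)
      fix y :: "real^'n" assume y: "(\<forall>i. y$i \<ge> 0) \<and> (\<Sum>i\<in>UNIV. y$i) \<le> B"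
      have "(\<Sum>i\<in>UNIV. \<beta>$i * y$i) \<le> (\<Sum>i\<in>UNIV. \<beta>$j * y$i)"
        by (rule sum_mono) (simp add: jm mult_right_mono y)
      also have "\<dots> = \<beta>$j * (\<Sum>i\<in>UNIV. y$i)" by (simp add: sum_distrib_left)
      also have "\<dots> \<le> \<beta>$j * B" using False y by (simp add: mult_left_mono)
      also have "\<dots> = (\<Sum>i\<in>UNIV. \<beta>$i * spike j B $ i)"
        by (simp add: spike_def if_distrib cong: if_cong)
      finally show "F y \<le> F (spike j B)" using F[of y] F[of "spike j B"] by simp
    qed blast
  qed
qed

lemma sum_mv: "(\<Sum>m\<in>UNIV. (D *v z) $ m) = (\<Sum>k\<in>UNIV. (\<Sum>m\<in>UNIV. D$m$k) * z$k)"
  by (simp add: matrix_vector_mult_def sum_distrib_right) (rule sum.swap)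

definition uvec :: "real^'n^'n \<Rightarrow> real^'n" where
  "uvec w = (\<chi> k. \<Sum>m\<in>UNIV. Delta w $m$k)"

lemma obj_formula:
  "objective w w0 theta v0 x1 x2 =
    (\<Sum>k\<in>UNIV. uvec w $ k * (w0$k * phase_step w w0 theta v0 x1 $ k +
        theta$k * (1 + w0$k * phase_step w w0 theta v0 x1 $ k) / 2 * x2$k))"
  unfolding objective_def opinion2_def phase_step_def[of _ _ _ "phase_step w w0 theta v0 x1"]
  by (simp add: sum_mv uvec_def camp_weight_def)

lemma ps_formula:
  "phase_step w w0 theta v0 x1 $ k =
    (\<Sum>i\<in>UNIV. Delta w $k$i * (w0$i * v0$i + camp_weight theta w0 v0 $ i * x1$i))"
  by (simp add: phase_step_def matrix_vector_mult_def)

lemma obj_x2: "\<exists>\<alpha> \<beta>. \<forall>y. objective w w0 theta v0 x1 y = \<alpha> + (\<Sum>i\<in>UNIV. \<beta>$i * y$i)"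
proof -
  let ?v = "phase_step w w0 theta v0 x1"
  show ?thesis
    apply (rule exI[of _ "\<Sum>k\<in>UNIV. uvec w $ k * w0$k * ?v $ k"])
    apply (rule exI[of _ "\<chi> k. uvec w $ k * (theta$k * (1 + w0$k * ?v $ k) / 2)"])
    by (simp add: obj_formula sum.distrib algebra_simps)
qed

lemma obj_x1: "\<exists>\<alpha> \<beta>. \<forall>y. objective w w0 theta v0 y x2 = \<alpha> + (\<Sum>i\<in>UNIV. \<beta>$i * y$i)"
proof -
  define D where "D = Delta w"
  define g where "g = camp_weight theta w0 v0"
  define \<gamma> where "\<gamma> = (\<chi> k. uvec w $ k * w0$k + uvec w $ k * theta$k * w0$k * x2$k / 2)"
  define C where "C = (\<Sum>k\<in>UNIV. uvec w $ k * theta$k * x2$k / 2)"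
  define p where "p = (\<chi> i. w0$i * v0$i)"
  have e1: "objective w w0 theta v0 y x2 = C + (\<Sum>k\<in>UNIV. \<gamma>$k * phase_step w w0 theta v0 y $ k)" for y
    unfolding obj_formula C_def \<gamma>_def by (simp add: sum.distrib[symmetric] algebra_simps add_divide_distrib)
  have e2: "(\<Sum>k\<in>UNIV. \<gamma>$k * phase_step w w0 theta v0 y $ k) =
     (\<Sum>k\<in>UNIV. \<Sum>i\<in>UNIV. \<gamma>$k * D$k$i * p$i) + (\<Sum>i\<in>UNIV. (\<Sum>k\<in>UNIV. \<gamma>$k * D$k$i * g$i) * y$i)" for y
  proof -
    have "(\<Sum>k\<in>UNIV. \<gamma>$k * phase_step w w0 theta v0 y $ k) =
       (\<Sum>k\<in>UNIV. \<Sum>i\<in>UNIV. \<gamma>$k * D$k$i * p$i + \<gamma>$k * D$k$i * g$i * y$i)"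
      unfolding ps_formula D_def g_def p_def by (simp add: sum_distrib_left algebra_simps)
    also have "\<dots> = (\<Sum>k\<in>UNIV. \<Sum>i\<in>UNIV. \<gamma>$k * D$k$i * p$i) + (\<Sum>k\<in>UNIV. \<Sum>i\<in>UNIV. \<gamma>$k * D$k$i * g$i * y$i)"
      by (simp add: sum.distrib)
    also have "(\<Sum>k\<in>UNIV. \<Sum>i\<in>UNIV. \<gamma>$k * D$k$i * g$i * y$i) = (\<Sum>i\<in>UNIV. (\<Sum>k\<in>UNIV. \<gamma>$k * D$k$i * g$i) * y$i)"
      by (subst sum.swap) (simp add: sum_distrib_right)
    finally show ?thesis .
  qed
  show ?thesis
    apply (rule exI[of _ "C + (\<Sum>k\<in>UNIV. \<Sum>i\<in>UNIV. \<gamma>$k * D$k$i * p$i)"])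
    apply (rule exI[of _ "\<chi> i. (\<Sum>k\<in>UNIV. \<gamma>$k * D$k$i * g$i)"])
    by (simp add: e1 e2)
qed


lemma exists_max:
  fixes w :: "real^'n^'n" and w0 theta v0 :: "real^'n" and kg :: real
  assumes "kg \<ge> 0"
  shows "\<exists>x1 x2. feasible kg x1 x2 \<and> (\<forall>y1 y2. feasible kg y1 y2 \<longrightarrow>
              objective w w0 theta v0 y1 y2 \<le> objective w w0 theta v0 x1 x2)"
proof -
  define S where "S = {p :: ((real^'n) \<times> (real^'n)). feasible kg (fst p) (snd p)}"
  have cl: "closed S"
    unfolding S_def feasible_def
    by (intro closed_Collect_conj closed_Collect_all closed_Collect_le continuous_intros)
  have bd: "bounded S"
    unfolding bounded_iff
  proof (intro exI[of _ kg] ballI)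
    fix p :: "(real^'n) \<times> (real^'n)" assume "p \<in> S"
    then have f: "feasible kg (fst p) (snd p)" by (simp add: S_def)
    have "norm p \<le> norm (fst p) + norm (snd p)" using norm_Pair_le[of "fst p" "snd p"] by simp
    also have "\<dots> \<le> (\<Sum>i\<in>UNIV. \<bar>fst p $ i\<bar>) + (\<Sum>i\<in>UNIV. \<bar>snd p $ i\<bar>)"
      by (intro add_mono norm_le_l1_cart)
    also have "\<dots> = (\<Sum>i\<in>UNIV. fst p $ i) + (\<Sum>i\<in>UNIV. snd p $ i)"
      using f unfolding feasible_def by simp
    also have "\<dots> \<le> kg" using f unfolding feasible_def by simp
    finally show "norm p \<le> kg" .
  qed
  have cpt: "compact S" using cl bd compact_eq_bounded_closed by blast
  have ne: "S \<noteq> {}"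
  proof -
    have "(0, 0) \<in> S" using assms by (simp add: S_def feasible_def)
    then show ?thesis by blast
  qed
  have c1: "\<And>k. continuous_on S (\<lambda>p. phase_step w w0 theta v0 (fst p) $ k)"
    unfolding ps_formula by (intro continuous_intros)
  have ct: "continuous_on S (\<lambda>p. objective w w0 theta v0 (fst p) (snd p))"
    unfolding obj_formula by (intro continuous_intros c1) auto
  obtain p where "p \<in> S" and pm: "\<forall>q\<in>S. objective w w0 theta v0 (fst q) (snd q) \<le> objective w w0 theta v0 (fst p) (snd p)"
    using continuous_attains_sup[OF cpt ne ct] by blast
  show ?thesis
  proof (intro exI conjI allI impI)
    show "feasible kg (fst p) (snd p)" using \<open>p \<in> S\<close> by (simp add: S_def)
    fix y1 y2 :: "real^'n" assume "feasible kg y1 y2"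
    then have "(y1, y2) \<in> S" by (simp add: S_def)
    then show "objective w w0 theta v0 y1 y2 \<le> objective w w0 theta v0 (fst p) (snd p)"
      using pm by force
  qed
qed

theorem lemma1:
  fixes w :: "real^'n^'n" and w0 theta v0 :: "real^'n" and kg :: real
  assumes "\<forall>i. (\<Sum>j\<in>UNIV. \<bar>w$i$j\<bar>) < 1"
    and "kg \<ge> 0"
  shows "\<exists>x1 x2. feasible kg x1 x2 \<and>
           (\<forall>y1 y2. feasible kg y1 y2 \<longrightarrow>
              objective w w0 theta v0 y1 y2 \<le> objective w w0 theta v0 x1 x2) \<and>
           ((\<Sum>i\<in>UNIV. x1$i) + (\<Sum>i\<in>UNIV. x2$i) = kg \<or>
              ((\<Sum>i\<in>UNIV. x1$i) = 0 \<and> (\<Sum>i\<in>UNIV. x2$i) = 0)) \<and>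
           card {i. x1$i \<noteq> 0} \<le> 1 \<and> card {i. x2$i \<noteq> 0} \<le> 1"
proof -
  let ?f = "objective w w0 theta v0"
  let ?s = "\<lambda>x::real^'n. \<Sum>i\<in>UNIV. x$i"
  have kg: "kg \<ge> 0" by fact
  obtain a1 a2 where fa: "feasible kg a1 a2" and am: "\<forall>y1 y2. feasible kg y1 y2 \<longrightarrow> ?f y1 y2 \<le> ?f a1 a2"
    using exists_max[OF kg] by blast
  have a1n: "\<forall>i. a1$i \<ge> 0" and a2n: "\<forall>i. a2$i \<ge> 0" and as: "?s a1 + ?s a2 \<le> kg"
    using fa by (auto simp: feasible_def)
  have s1: "?s a1 \<ge> 0" using a1n by (simp add: sum_nonneg)
  have s2: "?s a2 \<ge> 0" using a2n by (simp add: sum_nonneg)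
  have goodv: "\<And>x B. x = 0 \<or> (\<exists>j. x = spike j B) \<Longrightarrow> B \<ge> 0 \<Longrightarrow>
      (\<forall>i. x$i \<ge> 0) \<and> card {i. x$i \<noteq> 0} \<le> 1 \<and> (x = 0 \<and> ?s x = 0 \<or> ?s x = B)"
    using card_spike sum_spike spike_nonneg by auto
  obtain \<alpha>1 \<beta>1 where F1: "\<forall>y. ?f y a2 = \<alpha>1 + (\<Sum>i\<in>UNIV. \<beta>1$i * y$i)" using obj_x1 by blast
  obtain b1 where b1v: "b1 = 0 \<or> (\<exists>j. b1 = spike j (kg - ?s a2))"
    and b1m: "\<forall>y. (\<forall>i. y$i \<ge> 0) \<and> ?s y \<le> kg - ?s a2 \<longrightarrow> ?f y a2 \<le> ?f b1 a2"
    using vertex[of "\<lambda>y. ?f y a2" \<alpha>1 \<beta>1 "kg - ?s a2"] F1 as s1 by auto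
  have b1p: "(\<forall>i. b1$i \<ge> 0) \<and> card {i. b1$i \<noteq> 0} \<le> 1 \<and> (b1 = 0 \<and> ?s b1 = 0 \<or> ?s b1 = kg - ?s a2)"
    using goodv[OF b1v] as s1 by simp
  have sb1: "?s b1 \<le> kg - ?s a2" "?s b1 \<ge> 0" using b1p s2 as s1 by auto
  have fb1: "?f a1 a2 \<le> ?f b1 a2" using b1m a1n as by simp
  obtain \<alpha>2 \<beta>2 where F2: "\<forall>y. ?f b1 y = \<alpha>2 + (\<Sum>i\<in>UNIV. \<beta>2$i * y$i)" using obj_x2 by blast
  obtain b2 where b2v: "b2 = 0 \<or> (\<exists>j. b2 = spike j (kg - ?s b1))"
    and b2m: "\<forall>y. (\<forall>i. y$i \<ge> 0) \<and> ?s y \<le> kg - ?s b1 \<longrightarrow> ?f b1 y \<le> ?f b1 b2"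
    using vertex[of "\<lambda>y. ?f b1 y" \<alpha>2 \<beta>2 "kg - ?s b1"] F2 sb1 s2 by auto
  have b2p: "(\<forall>i. b2$i \<ge> 0) \<and> card {i. b2$i \<noteq> 0} \<le> 1 \<and> (b2 = 0 \<and> ?s b2 = 0 \<or> ?s b2 = kg - ?s b1)"
    using goodv[OF b2v] sb1 s2 by simp
  have fb2: "?f b1 a2 \<le> ?f b1 b2" using b2m a2n sb1 by simp
  have feasb: "feasible kg b1 b2" using b1p b2p sb1 kg s2 by (auto simp: feasible_def)
  have optb: "\<forall>y1 y2. feasible kg y1 y2 \<longrightarrow> ?f y1 y2 \<le> ?f b1 b2"
    using am fb1 fb2 by (meson order_trans)
  show ?thesis
  proof (cases "?s b2 = kg - ?s b1 \<or> b1 = 0")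
    case True
    then show ?thesis
      using feasb optb b1p b2p by (intro exI[of _ b1] exI[of _ b2]) auto
  next
    case False
    then have b20: "b2 = 0" using b2p by auto
    obtain \<alpha>3 \<beta>3 where F3: "\<forall>y. ?f y 0 = \<alpha>3 + (\<Sum>i\<in>UNIV. \<beta>3$i * y$i)" using obj_x1 by blast
    obtain c1 where c1v: "c1 = 0 \<or> (\<exists>j. c1 = spike j kg)"
      and c1m: "\<forall>y. (\<forall>i. y$i \<ge> 0) \<and> ?s y \<le> kg \<longrightarrow> ?f y 0 \<le> ?f c1 0"
      using vertex[of "\<lambda>y. ?f y 0" \<alpha>3 \<beta>3 kg] F3 kg by auto
    have c1p: "(\<forall>i. c1$i \<ge> 0) \<and> card {i. c1$i \<noteq> 0} \<le> 1 \<and> (c1 = 0 \<and> ?s c1 = 0 \<or> ?s c1 = kg)"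
      using goodv[OF c1v] kg by simp
    have fc: "?f b1 0 \<le> ?f c1 0" using c1m b1p sb1 s2 by auto
    have feasc: "feasible kg c1 0" using c1p kg by (auto simp: feasible_def)
    have optc: "\<forall>y1 y2. feasible kg y1 y2 \<longrightarrow> ?f y1 y2 \<le> ?f c1 0"
      using optb fc b20 by (metis order_trans)
    show ?thesis
      using feasc optc c1p by (intro exI[of _ c1] exI[of _ 0]) auto
  qed
qed

end
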